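(* Let $\mathcal M$ be a first-order structure equipped with a dimension satisfying axioms A1–A2. Let $(X_a)_{a\in A}$ be a uniformly definable family of sets indexed by a definable set $A$, with $X_a=X_{a'}$ if and only if $a=a'$. Let $U=\bigcup_{a\in A}X_a$ and, for $0\leq r\leq\dim(A)$, let $U_r=\{x\in U: \dim(\{a\in A: x\in X_a\})=r\}$ and $[X_a]_r=X_a\cap U_r$. Suppose that for some such $r$, $[X_a]_r$ is nonempty and $\dim([X_a]_r)$ does not depend on $a\in A$. Then $\dim(U_r)+r=\dim(A)+\dim([X_a]_r)$.
   Context: The dimension assigns to each nonempty definable set a natural number such that: (A1) if $f:B\to C$ is definable between nonempty definable sets, then $\{c\in C:\dim(f^{-1}(c))=m\}$ is definable for every $m$; (A2) if $f:B\to C$ is definable and all its fibers have dimension $m$, then $\dim B=\dim f(B)+m$. (By A1 the sets $U_r$ and $[X_a]_r$ are definable.) *)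

theory Defs
  imports Main
begin

text \<open>The definable sets (with parameters) of a first-order structure with universe
  of type 'a are modelled, as in van den Dries' notion of a "structure", by a family
  S n of subsets of M^n, where M^n is represented by the lists of length n.\<close>

definition tuples :: "nat \<Rightarrow> 'a list set" where
  "tuples n = {xs. length xs = n}"

definition definable_structure :: "(nat \<Rightarrow> 'a list set set) \<Rightarrow> bool" where
  "definable_structure S \<longleftrightarrow>
     (\<forall>n. S n \<subseteq> Pow (tuples n)) \<and>
     (\<forall>n. {} \<in> S n \<and> tuples n \<in> S n) \<and>
     (\<forall>n A B. A \<in> S n \<longrightarrow> B \<in> S n \<longrightarrow> A \<union> B \<in> S n) \<and>
     (\<forall>n A. A \<in> S n \<longrightarrow> tuples n - A \<in> S n) \<and>
     (\<forall>n A. A \<in> S n \<longrightarrow> {xs @ [y] | xs y. xs \<in> A} \<in> S (Suc n)) \<and>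
     (\<forall>n A. A \<in> S n \<longrightarrow> {y # xs | xs y. xs \<in> A} \<in> S (Suc n)) \<and>
     (\<forall>n i j. i < n \<longrightarrow> j < n \<longrightarrow> {xs \<in> tuples n. xs ! i = xs ! j} \<in> S n) \<and>
     (\<forall>n A. A \<in> S (Suc n) \<longrightarrow> take n ` A \<in> S n) \<and>
     (\<forall>c. {[c]} \<in> S 1)"

definition definable :: "(nat \<Rightarrow> 'a list set set) \<Rightarrow> 'a list set \<Rightarrow> bool" where
  "definable S X \<longleftrightarrow> (\<exists>n. X \<in> S n)"

definition definable_map ::
  "(nat \<Rightarrow> 'a list set set) \<Rightarrow> nat \<Rightarrow> nat \<Rightarrow> ('a list \<Rightarrow> 'a list) \<Rightarrow> 'a list set \<Rightarrow> 'a list set \<Rightarrow> bool" where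
  "definable_map S n m f B C \<longleftrightarrow>
     B \<in> S n \<and> C \<in> S m \<and> f ` B \<subseteq> C \<and> {xs @ f xs | xs. xs \<in> B} \<in> S (n + m)"

definition fiber :: "('a list \<Rightarrow> 'a list) \<Rightarrow> 'a list set \<Rightarrow> 'a list \<Rightarrow> 'a list set" where
  "fiber f B c = {x \<in> B. f x = c}"

text \<open>A dimension: axioms (A1) and (A2). dim is only meaningful on nonempty definable sets.\<close>
definition dimension :: "(nat \<Rightarrow> 'a list set set) \<Rightarrow> ('a list set \<Rightarrow> nat) \<Rightarrow> bool" where
  "dimension S dim \<longleftrightarrow>
     (\<forall>n m f B C k. definable_map S n m f B C \<longrightarrow> B \<noteq> {} \<longrightarrow> C \<noteq> {} \<longrightarrow>
        {c \<in> C. fiber f B c \<noteq> {} \<and> dim (fiber f B c) = k} \<in> S m) \<and>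
     (\<forall>n m f B C k. definable_map S n m f B C \<longrightarrow> B \<noteq> {} \<longrightarrow>
        (\<forall>c \<in> f ` B. dim (fiber f B c) = k) \<longrightarrow> dim B = dim (f ` B) + k)"

text \<open>Members of a uniformly definable family: X_a = {y. a @ y \<in> X}.\<close>
definition fam :: "'a list set \<Rightarrow> 'a list \<Rightarrow> 'a list set" where
  "fam X a = {y. a @ y \<in> X}"

end

theory Submission
  imports Defs
begin

lemma ds_sub: "definable_structure S \<Longrightarrow> A \<in> S n \<Longrightarrow> A \<subseteq> tuples n"
  by (auto simp: definable_structure_def)

lemma ds_tuples: "definable_structure S \<Longrightarrow> tuples n \<in> S n"
  by (auto simp: definable_structure_def)

lemma ds_Un: "definable_structure S \<Longrightarrow> A \<in> S n \<Longrightarrow> B \<in> S n \<Longrightarrow> A \<union> B \<in> S n"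
  unfolding definable_structure_def by (elim conjE) simp

lemma ds_compl: "definable_structure S \<Longrightarrow> A \<in> S n \<Longrightarrow> tuples n - A \<in> S n"
  unfolding definable_structure_def by (elim conjE) simp

lemma ds_snoc: "definable_structure S \<Longrightarrow> A \<in> S n \<Longrightarrow> {xs @ [y] | xs y. xs \<in> A} \<in> S (Suc n)"
  unfolding definable_structure_def by (elim conjE) simp

lemma ds_cons: "definable_structure S \<Longrightarrow> A \<in> S n \<Longrightarrow> {y # xs | xs y. xs \<in> A} \<in> S (Suc n)"
  unfolding definable_structure_def by (elim conjE) simp

lemma ds_pt: "definable_structure S \<Longrightarrow> {[c]} \<in> S 1"
  unfolding definable_structure_def by (elim conjE) simp

lemma ds_Int:
  assumes ds: "definable_structure S" and a: "A \<in> S n" and b: "B \<in> S n"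
  shows "A \<inter> B \<in> S n"
proof -
  have "A \<inter> B = tuples n - ((tuples n - A) \<union> (tuples n - B))"
    using ds_sub[OF ds a] ds_sub[OF ds b] by auto
  moreover have "tuples n - ((tuples n - A) \<union> (tuples n - B)) \<in> S n"
    using ds_Un[OF ds ds_compl[OF ds a] ds_compl[OF ds b]] by (rule ds_compl[OF ds])
  ultimately show ?thesis by simp
qed

lemma ds_diag: "definable_structure S \<Longrightarrow> i < n \<Longrightarrow> j < n \<Longrightarrow> {xs \<in> tuples n. xs ! i = xs ! j} \<in> S n"
  by (auto simp: definable_structure_def)

lemma ds_cylr:
  assumes ds: "definable_structure S" and a: "A \<in> S n"
  shows "{xs @ ys | xs ys. xs \<in> A \<and> length ys = m} \<in> S (n+m)"
proof (induction m)
  case 0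
  have "{xs @ ys | xs ys. xs \<in> A \<and> length ys = 0} = A" by auto
  then show ?case using a by simp
next
  case (Suc m)
  let ?P = "{xs @ ys | xs ys. xs \<in> A \<and> length ys = m}"
  have "{xs @ [y] | xs y. xs \<in> ?P} \<in> S (Suc (n+m))"
    using ds_snoc[OF ds Suc.IH] .
  moreover have "{xs @ [y] | xs y. xs \<in> ?P} = {xs @ ys | xs ys. xs \<in> A \<and> length ys = Suc m}"
  proof (rule set_eqI, rule iffI)
    fix w assume "w \<in> {xs @ [y] | xs y. xs \<in> ?P}"
    then obtain xs ys y where "w = (xs @ ys) @ [y]" "xs \<in> A" "length ys = m" by blast
    then show "w \<in> {xs @ ys | xs ys. xs \<in> A \<and> length ys = Suc m}"
      by (intro CollectI exI[of _ xs] exI[of _ "ys @ [y]"]) auto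
  next
    fix w assume "w \<in> {xs @ ys | xs ys. xs \<in> A \<and> length ys = Suc m}"
    then obtain xs ys where w: "w = xs @ ys" "xs \<in> A" "length ys = Suc m" by blast
    have "ys = butlast ys @ [last ys]"
      using w(3) by (cases ys rule: rev_cases) auto
    then have "w = (xs @ butlast ys) @ [last ys]" using w(1) by simp
    moreover have "xs @ butlast ys \<in> ?P" using w
      by (intro CollectI exI[of _ xs] exI[of _ "butlast ys"]) auto
    ultimately show "w \<in> {xs @ [y] | xs y. xs \<in> ?P}" by blast
  qed
  ultimately show ?case by simp
qed

lemma ds_cyll:
  assumes ds: "definable_structure S" and a: "A \<in> S n"
  shows "{ys @ xs | ys xs. length ys = m \<and> xs \<in> A} \<in> S (m+n)"
proof (induction m)
  case 0
  have "{ys @ xs | ys xs. length ys = 0 \<and> xs \<in> A} = A" by auto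
  then show ?case using a by simp
next
  case (Suc m)
  let ?P = "{ys @ xs | ys xs. length ys = m \<and> xs \<in> A}"
  have "{y # xs | xs y. xs \<in> ?P} \<in> S (Suc (m+n))"
    using ds_cons[OF ds Suc.IH] .
  moreover have "{y # xs | xs y. xs \<in> ?P} = {ys @ xs | ys xs. length ys = Suc m \<and> xs \<in> A}"
  proof (rule set_eqI, rule iffI)
    fix w assume "w \<in> {y # xs | xs y. xs \<in> ?P}"
    then obtain xs ys y where "w = y # (ys @ xs)" "xs \<in> A" "length ys = m" by blast
    then show "w \<in> {ys @ xs | ys xs. length ys = Suc m \<and> xs \<in> A}"
      by (intro CollectI exI[of _ "y # ys"] exI[of _ xs]) auto
  next
    fix w assume "w \<in> {ys @ xs | ys xs. length ys = Suc m \<and> xs \<in> A}"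
    then obtain xs ys where w: "w = ys @ xs" "xs \<in> A" "length ys = Suc m" by blast
    then obtain y ys' where "ys = y # ys'" by (cases ys) auto
    with w show "w \<in> {y # xs | xs y. xs \<in> ?P}" by auto
  qed
  ultimately show ?case by simp
qed

lemma ds_single:
  assumes ds: "definable_structure S"
  shows "{p} \<in> S (length p)"
proof (induction p)
  case Nil
  have "{[]} = tuples 0" by (auto simp: tuples_def)
  then have "{[]} \<in> S 0" using ds_tuples[OF ds, of 0] by metis
  then show ?case by simp
next
  case (Cons c p)
  have c1: "{[c]} \<in> S 1" by (rule ds_pt[OF ds])
  have s1: "{xs @ ys | xs ys. xs \<in> {[c]} \<and> length ys = length p} \<in> S (1 + length p)"
    by (rule ds_cylr[OF ds c1])
  have s2: "{ys @ xs | ys xs. length ys = 1 \<and> xs \<in> {p}} \<in> S (1 + length p)"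
    by (rule ds_cyll[OF ds Cons])
  have "{c # p} = {xs @ ys | xs ys. xs \<in> {[c]} \<and> length ys = length p} \<inter>
          {ys @ xs | ys xs. length ys = 1 \<and> xs \<in> {p}}"
  proof (rule set_eqI, rule iffI)
    fix w assume "w \<in> {c # p}"
    then show "w \<in> {xs @ ys | xs ys. xs \<in> {[c]} \<and> length ys = length p} \<inter>
          {ys @ xs | ys xs. length ys = 1 \<and> xs \<in> {p}}"
      by (auto intro!: exI[of _ "[c]"])
  next
    fix w assume "w \<in> {xs @ ys | xs ys. xs \<in> {[c]} \<and> length ys = length p} \<inter>
          {ys @ xs | ys xs. length ys = 1 \<and> xs \<in> {p}}"
    then obtain ys zs where "w = [c] @ ys" "w = zs @ p" "length zs = 1" "length ys = length p" by blast
    then show "w \<in> {c # p}"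
      by (cases zs) auto
  qed
  then show ?case using ds_Int[OF ds s1 s2] by simp
qed

lemma ds_blk:
  assumes ds: "definable_structure S"
  shows "p + j \<le> N \<Longrightarrow> q + j \<le> N \<Longrightarrow> {z \<in> tuples N. \<forall>l<j. z!(p+l) = z!(q+l)} \<in> S N"
proof (induction j)
  case 0
  then show ?case using ds_tuples[OF ds] by simp
next
  case (Suc j)
  have e1: "{z \<in> tuples N. \<forall>l<Suc j. z!(p+l) = z!(q+l)} =
        {z \<in> tuples N. \<forall>l<j. z!(p+l) = z!(q+l)} \<inter> {z \<in> tuples N. z!(p+j) = z!(q+j)}"
    by (auto simp: less_Suc_eq)
  have e2: "{z \<in> tuples N. z!(p+j) = z!(q+j)} \<in> S N"
    using ds_diag[OF ds, of "p+j" N "q+j"] Suc.prems by simp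
  have e3: "{z \<in> tuples N. \<forall>l<j. z!(p+l) = z!(q+l)} \<in> S N"
    using Suc.IH Suc.prems by simp
  show ?case unfolding e1 by (rule ds_Int[OF ds e3 e2])
qed

lemma dm_sub:
  assumes ds: "definable_structure S" and b: "B \<in> S N" and ij: "i + j \<le> N"
  shows "definable_map S N j (\<lambda>z. take j (drop i z)) B (tuples j)"
proof -
  have Bs: "B \<subseteq> tuples N" using ds_sub[OF ds b] .
  let ?G = "{xs @ ys | xs ys. xs \<in> B \<and> length ys = j} \<inter> {z \<in> tuples (N+j). \<forall>l<j. z!(i+l) = z!(N+l)}"
  have G: "?G \<in> S (N+j)"
    using ds_Int[OF ds ds_cylr[OF ds b] ds_blk[OF ds]] ij by simp
  have "{xs @ take j (drop i xs) | xs. xs \<in> B} = ?G"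
  proof (rule set_eqI, rule iffI)
    fix w assume "w \<in> {xs @ take j (drop i xs) | xs. xs \<in> B}"
    then obtain xs where w: "w = xs @ take j (drop i xs)" "xs \<in> B" by blast
    then have l: "length xs = N" using Bs by (auto simp: tuples_def)
    have "w \<in> {xs @ ys | xs ys. xs \<in> B \<and> length ys = j}"
      using w l ij by (intro CollectI exI[of _ xs] exI[of _ "take j (drop i xs)"]) auto
    then show "w \<in> ?G" using w l ij by (auto simp: tuples_def nth_append)
  next
    fix w assume "w \<in> ?G"
    then obtain xs ys where w: "w = xs @ ys" "xs \<in> B" "length ys = j"
      and e: "\<forall>l<j. w!(i+l) = w!(N+l)" by blast
    then have l: "length xs = N" using Bs by (auto simp: tuples_def)
    have "ys = take j (drop i xs)"
    proof (rule nth_equalityI)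
      show "length ys = length (take j (drop i xs))" using w l ij by simp
      fix l assume "l < length ys"
      then show "ys ! l = take j (drop i xs) ! l"
        using e[rule_format, of l] w l ij by (auto simp: nth_append)
    qed
    then show "w \<in> {xs @ take j (drop i xs) | xs. xs \<in> B}" using w by blast
  qed
  moreover have "\<forall>z\<in>B. length z = N" using Bs by (auto simp: tuples_def)
  ultimately show ?thesis unfolding definable_map_def using b ds_tuples[OF ds] G ij
    by (auto simp: tuples_def)
qed

lemma dm_cong:
  assumes "definable_map S N m f B C" "\<forall>z\<in>B. f z = g z"
  shows "definable_map S N m g B C"
proof -
  have "{xs @ f xs | xs. xs \<in> B} = {xs @ g xs | xs. xs \<in> B}" using assms(2) by force
  moreover have "f ` B = g ` B" using assms(2) by force
  ultimately show ?thesis using assms(1) unfolding definable_map_def by simp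
qed

lemma dm_take:
  assumes ds: "definable_structure S" and b: "B \<in> S (n+k)"
  shows "definable_map S (n+k) n (take n) B (tuples n)"
  using dm_cong[OF dm_sub[OF ds b, of 0 n]] by simp

lemma dm_drop:
  assumes ds: "definable_structure S" and b: "B \<in> S (n+k)"
  shows "definable_map S (n+k) k (drop n) B (tuples k)"
proof (rule dm_cong[OF dm_sub[OF ds b, of n k]])
  show "\<forall>z\<in>B. take k (drop n z) = drop n z"
    using ds_sub[OF ds b] by (auto simp: tuples_def)
qed simp

lemma split_l: "z \<in> {ys @ xs | ys xs. length ys = n \<and> xs \<in> P} \<longleftrightarrow> n \<le> length z \<and> drop n z \<in> P"
proof
  assume "n \<le> length z \<and> drop n z \<in> P"
  then show "z \<in> {ys @ xs | ys xs. length ys = n \<and> xs \<in> P}"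
    by (intro CollectI exI[of _ "take n z"] exI[of _ "drop n z"]) auto
qed auto

lemma split_r: "z \<in> {xs @ ys | xs ys. xs \<in> P \<and> length ys = k} \<longleftrightarrow> k \<le> length z \<and> take (length z - k) z \<in> P"
proof
  assume "k \<le> length z \<and> take (length z - k) z \<in> P"
  then show "z \<in> {xs @ ys | xs ys. xs \<in> P \<and> length ys = k}"
    by (intro CollectI exI[of _ "take (length z - k) z"] exI[of _ "drop (length z - k) z"]) auto
qed auto

lemma A2:
  assumes "dimension S dim" "definable_map S n m f B C" "B \<noteq> {}" "\<forall>c \<in> f ` B. dim (fiber f B c) = k"
  shows "dim B = dim (f ` B) + k"
  using assms unfolding dimension_def by blast

lemma dim_single:
  assumes ds: "definable_structure S" and dimS: "dimension S dim"
  shows "dim {p} = 0"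
proof -
  have g: "{xs @ xs | xs. xs \<in> {p}} = {p @ p}" by auto
  have "{p @ p} \<in> S (length p + length p)" using ds_single[OF ds, of "p@p"] by simp
  then have dm: "definable_map S (length p) (length p) (\<lambda>x. x) {p} {p}"
    unfolding definable_map_def using g ds_single[OF ds, of p] by simp
  have "fiber (\<lambda>x. x) {p} p = {p}" by (auto simp: fiber_def)
  then have "dim {p} = dim ((\<lambda>x. x) ` {p}) + dim {p}"
    by (intro A2[OF dimS dm]) auto
  then show ?thesis by simp
qed

lemma dim_inj:
  assumes ds: "definable_structure S" and dimS: "dimension S dim"
    and dm: "definable_map S N m f B C" and ne: "B \<noteq> {}" and inj: "inj_on f B"
  shows "dim B = dim (f ` B)"
proof -
  have "\<forall>c \<in> f ` B. dim (fiber f B c) = 0"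
  proof
    fix c assume "c \<in> f ` B"
    then obtain b where b: "b \<in> B" "c = f b" by blast
    then have "fiber f B c = {b}" using inj by (auto simp: fiber_def inj_on_def)
    then show "dim (fiber f B c) = 0" using dim_single[OF ds dimS] by simp
  qed
  from A2[OF dimS dm ne this] show ?thesis by simp
qed

theorem proposition3p2:
  fixes S :: "nat \<Rightarrow> 'a list set set" and dim :: "'a list set \<Rightarrow> nat"
    and A X :: "'a list set" and n k r d :: nat
  assumes struct: "definable_structure S"
    and dimS: "dimension S dim"
    and A_def: "A \<in> S n" and A_ne: "A \<noteq> {}"
    and X_def: "X \<in> S (n + k)"
    and inj: "\<forall>a \<in> A. \<forall>a' \<in> A. fam X a = fam X a' \<longleftrightarrow> a = a'"
    and r_le: "r \<le> dim A"
    and nonempty: "\<forall>a \<in> A. fam X a \<inter>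
        {x \<in> (\<Union>a \<in> A. fam X a). dim {a \<in> A. x \<in> fam X a} = r} \<noteq> {}"
    and const: "\<forall>a \<in> A. dim (fam X a \<inter>
        {x \<in> (\<Union>a \<in> A. fam X a). dim {a \<in> A. x \<in> fam X a} = r}) = d"
  shows "dim {x \<in> (\<Union>a \<in> A. fam X a). dim {a \<in> A. x \<in> fam X a} = r} + r = dim A + d"
proof -
  define Ur where "Ur = {x \<in> (\<Union>a \<in> A. fam X a). dim {a \<in> A. x \<in> fam X a} = r}"
  have Asub: "\<And>a. a \<in> A \<Longrightarrow> length a = n" using ds_sub[OF struct A_def] by (auto simp: tuples_def)
  have Xsub: "\<And>z. z \<in> X \<Longrightarrow> length z = n + k" using ds_sub[OF struct X_def] by (auto simp: tuples_def)
  have famlen: "\<And>a x. a \<in> A \<Longrightarrow> x \<in> fam X a \<Longrightarrow> length x = k"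
    using Asub Xsub by (fastforce simp: fam_def)
  define F where "F = {z \<in> X. take n z \<in> A}"
  have F_eq: "F = X \<inter> {xs @ ys | xs ys. xs \<in> A \<and> length ys = k}"
  proof (rule set_eqI, rule iffI)
    fix z assume "z \<in> F"
    then have "z \<in> X" "take n z \<in> A" by (auto simp: F_def)
    then show "z \<in> X \<inter> {xs @ ys | xs ys. xs \<in> A \<and> length ys = k}"
      using Xsub[of z] by (intro IntI CollectI exI[of _ "take n z"] exI[of _ "drop n z"]) auto
  next
    fix z assume "z \<in> X \<inter> {xs @ ys | xs ys. xs \<in> A \<and> length ys = k}"
    then show "z \<in> F" using Asub by (auto simp: F_def)
  qed
  have F_S: "F \<in> S (n+k)" unfolding F_eq by (rule ds_Int[OF struct X_def ds_cylr[OF struct A_def]])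
  have memF: "\<And>a x. a \<in> A \<Longrightarrow> x \<in> fam X a \<Longrightarrow> a @ x \<in> F"
    using Asub by (auto simp: F_def fam_def)
  have Fdec: "\<And>z. z \<in> F \<Longrightarrow> take n z \<in> A \<and> drop n z \<in> fam X (take n z)"
    by (auto simp: F_def fam_def)
  obtain a0 where a0: "a0 \<in> A" using A_ne by blast
  obtain x0 where x0: "x0 \<in> fam X a0 \<inter> Ur" using nonempty a0 unfolding Ur_def by blast
  have F_ne: "F \<noteq> {}" using memF[OF a0, of x0] x0 by auto
  have fibdim: "dim (fiber (drop n) F x) = dim {a \<in> A. x \<in> fam X a}"
    if xU: "x \<in> (\<Union>a \<in> A. fam X a)" for x
  proof -
    obtain a where a: "a \<in> A" "x \<in> fam X a" using xU by blast
    have lx: "length x = k" using famlen a by blast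
    let ?B = "fiber (drop n) F x"
    have "?B = F \<inter> {ys @ xs | ys xs. length ys = n \<and> xs \<in> {x}}"
      by (rule set_eqI, simp only: Int_iff split_l) (auto simp: fiber_def F_def dest: Xsub)
    moreover have "{ys @ xs | ys xs. length ys = n \<and> xs \<in> {x}} \<in> S (n+k)"
      using ds_cyll[OF struct ds_single[OF struct, of x], of n] lx by simp
    ultimately have BS: "?B \<in> S (n+k)" using ds_Int[OF struct F_S] by simp
    have ne: "?B \<noteq> {}" using memF[OF a] Asub[OF a(1)] by (auto simp: fiber_def)
    have ij: "inj_on (take n) ?B"
      by (auto simp: inj_on_def fiber_def) (metis append_take_drop_id)
    have im: "take n ` ?B = {a \<in> A. x \<in> fam X a}"
    proof (rule set_eqI, rule iffI)
      fix b assume "b \<in> take n ` ?B"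
      then obtain z where "z \<in> F" "drop n z = x" "b = take n z" by (auto simp: fiber_def)
      then show "b \<in> {a \<in> A. x \<in> fam X a}" using Fdec by auto
    next
      fix b assume b: "b \<in> {a \<in> A. x \<in> fam X a}"
      then have "b @ x \<in> ?B" using memF Asub by (auto simp: fiber_def)
      moreover have "take n (b @ x) = b" using b Asub by auto
      ultimately show "b \<in> take n ` ?B" by force
    qed
    show ?thesis using dim_inj[OF struct dimS dm_take[OF struct BS] ne ij] im by simp
  qed
  \<comment> \<open>Ur is definable via A1\<close>
  have A1: "{c \<in> tuples k. fiber (drop n) F c \<noteq> {} \<and> dim (fiber (drop n) F c) = r} \<in> S k"
  proof -
    have A1g: "\<And>n m f B C k. definable_map S n m f B C \<Longrightarrow> B \<noteq> {} \<Longrightarrow> C \<noteq> {} \<Longrightarrow>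
        {c \<in> C. fiber f B c \<noteq> {} \<and> dim (fiber f B c) = k} \<in> S m"
    proof -
      fix n m f B C k
      assume h: "definable_map S n m f B C" "B \<noteq> {}" "C \<noteq> {}"
      have "\<forall>n m f B C k. definable_map S n m f B C \<longrightarrow> B \<noteq> {} \<longrightarrow> C \<noteq> {} \<longrightarrow>
        {c \<in> C. fiber f B c \<noteq> {} \<and> dim (fiber f B c) = k} \<in> S m"
        using dimS unfolding dimension_def by (rule conjunct1)
      then show "{c \<in> C. fiber f B c \<noteq> {} \<and> dim (fiber f B c) = k} \<in> S m" using h by simp
    qed
    have "x0 \<in> tuples k" unfolding tuples_def using famlen[OF a0 IntD1[OF x0]] by (rule CollectI)
    then have tk: "tuples k \<noteq> ({} :: 'a list set)" by (metis equals0D)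
    show ?thesis using A1g[OF dm_drop[OF struct F_S] F_ne tk] .
  qed
  have fibne: "fiber (drop n) F c \<noteq> {} \<longleftrightarrow> c \<in> (\<Union>a \<in> A. fam X a)" for c
  proof
    assume "fiber (drop n) F c \<noteq> {}"
    then obtain z where "z \<in> F" "drop n z = c" by (auto simp: fiber_def)
    then show "c \<in> (\<Union>a \<in> A. fam X a)" using Fdec by blast
  next
    assume "c \<in> (\<Union>a \<in> A. fam X a)"
    then obtain a where a: "a \<in> A" "c \<in> fam X a" by blast
    then show "fiber (drop n) F c \<noteq> {}" using memF[OF a] Asub[OF a(1)] by (auto simp: fiber_def)
  qed
  have Ur_eq: "Ur = {c \<in> tuples k. fiber (drop n) F c \<noteq> {} \<and> dim (fiber (drop n) F c) = r}"
  proof (rule set_eqI, rule iffI)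
    fix c assume c: "c \<in> Ur"
    then have cU: "c \<in> (\<Union>a \<in> A. fam X a)" and cd: "dim {a \<in> A. c \<in> fam X a} = r"
      unfolding Ur_def by auto
    from cU obtain a where "a \<in> A" "c \<in> fam X a" by blast
    then have "length c = k" by (rule famlen)
    then show "c \<in> {c \<in> tuples k. fiber (drop n) F c \<noteq> {} \<and> dim (fiber (drop n) F c) = r}"
      using fibne[of c] fibdim[OF cU] cU cd by (simp add: tuples_def)
  next
    fix c assume c: "c \<in> {c \<in> tuples k. fiber (drop n) F c \<noteq> {} \<and> dim (fiber (drop n) F c) = r}"
    then have cU: "c \<in> (\<Union>a \<in> A. fam X a)" using fibne by blast
    show "c \<in> Ur" unfolding Ur_def using c cU fibdim[OF cU] by simp
  qed
  have Ur_S: "Ur \<in> S k" using A1 Ur_eq by simp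
  define Z where "Z = {z \<in> F. drop n z \<in> Ur}"
  have Z_eq: "Z = F \<inter> {ys @ xs | ys xs. length ys = n \<and> xs \<in> Ur}"
    by (rule set_eqI, simp only: Int_iff split_l) (auto simp: Z_def F_def dest: Xsub)
  have Z_S: "Z \<in> S (n+k)" unfolding Z_eq by (rule ds_Int[OF struct F_S ds_cyll[OF struct Ur_S]])
  have memZ: "\<And>a x. a \<in> A \<Longrightarrow> x \<in> fam X a \<Longrightarrow> x \<in> Ur \<Longrightarrow> a @ x \<in> Z"
    using memF Asub by (auto simp: Z_def)
  have Z_ne: "Z \<noteq> {}" using memZ[OF a0, of x0] x0 by auto
  have imd: "drop n ` Z = Ur"
  proof (rule set_eqI, rule iffI)
    fix x assume "x \<in> drop n ` Z" then show "x \<in> Ur" by (auto simp: Z_def)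
  next
    fix x assume x: "x \<in> Ur"
    then obtain a where a: "a \<in> A" "x \<in> fam X a" unfolding Ur_def by blast
    then have "a @ x \<in> Z" using memZ x by blast
    moreover have "drop n (a @ x) = x" using Asub a by simp
    ultimately show "x \<in> drop n ` Z" by force
  qed
  have e1: "dim Z = dim (drop n ` Z) + r"
  proof (rule A2[OF dimS dm_drop[OF struct Z_S] Z_ne], rule ballI)
    fix x assume "x \<in> drop n ` Z"
    then have x: "x \<in> Ur" using imd by simp
    have "fiber (drop n) Z x = fiber (drop n) F x" using x by (auto simp: fiber_def Z_def)
    then show "dim (fiber (drop n) Z x) = r" using fibdim x unfolding Ur_def by auto
  qed
  have imt: "take n ` Z = A"
  proof (rule set_eqI, rule iffI)
    fix a assume "a \<in> take n ` Z" then show "a \<in> A" by (auto simp: Z_def F_def)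
  next
    fix a assume a: "a \<in> A"
    then obtain x where x: "x \<in> fam X a" "x \<in> Ur" using nonempty unfolding Ur_def by blast
    then have "a @ x \<in> Z" using memZ a by blast
    moreover have "take n (a @ x) = a" using Asub a by simp
    ultimately show "a \<in> take n ` Z" by force
  qed
  have e2: "dim Z = dim (take n ` Z) + d"
  proof (rule A2[OF dimS dm_take[OF struct Z_S] Z_ne], rule ballI)
    fix a assume "a \<in> take n ` Z"
    then have a: "a \<in> A" using imt by simp
    let ?B = "fiber (take n) Z a"
    have "?B = Z \<inter> {xs @ ys | xs ys. xs \<in> {a} \<and> length ys = k}"
      by (rule set_eqI, simp only: Int_iff split_r) (auto simp: fiber_def Z_def F_def dest: Xsub)
    moreover have "{xs @ ys | xs ys. xs \<in> {a} \<and> length ys = k} \<in> S (n+k)"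
      using ds_cylr[OF struct ds_single[OF struct, of a], of k] Asub[OF a] by simp
    ultimately have BS: "?B \<in> S (n+k)" using ds_Int[OF struct Z_S] by simp
    have ij: "inj_on (drop n) ?B"
      by (auto simp: inj_on_def fiber_def) (metis append_take_drop_id)
    have im: "drop n ` ?B = fam X a \<inter> Ur"
    proof (rule set_eqI, rule iffI)
      fix x assume "x \<in> drop n ` ?B"
      then obtain z where "z \<in> Z" "take n z = a" "x = drop n z" by (auto simp: fiber_def)
      then show "x \<in> fam X a \<inter> Ur" using Fdec by (auto simp: Z_def)
    next
      fix x assume x: "x \<in> fam X a \<inter> Ur"
      then have "a @ x \<in> ?B" using memZ[OF a] Asub[OF a] by (auto simp: fiber_def)
      moreover have "drop n (a @ x) = x" using Asub a by simp
      ultimately show "x \<in> drop n ` ?B" by force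
    qed
    have nE: "fam X a \<inter> Ur \<noteq> {}" unfolding Ur_def by (rule nonempty[rule_format, OF a])
    have ne: "?B \<noteq> {}"
    proof
      assume "?B = {}"
      then have "drop n ` ?B = {}" by simp
      with im nE show False by simp
    qed
    have "dim ?B = dim (fam X a \<inter> Ur)"
      using dim_inj[OF struct dimS dm_drop[OF struct BS] ne ij] im by simp
    then show "dim ?B = d" using const a unfolding Ur_def by simp
  qed
  from e1 e2 imd imt show ?thesis unfolding Ur_def by simp
qed

end
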